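(* Let $x_0\in X^{b_0^\star}_{++}$ and $v(x)=\alpha\frac{\langle x,b_0^\star\rangle^{1-\gamma}}{1-\gamma}$ on $X^{b_0^\star}_{++}$. Then $$\lim_{k\in\mathbb N,\,k\to\infty}e^{-\rho k}v\big(x^{x_0,c}(k)\big)=0\quad\text{for every }c\in\mathcal A^{b_0^\star}_{++}(x_0)\text{ with }\mathcal J(c)>-\infty.$$
   Context: $X$ is either $L^p(D,\mu)$, $p\in[1,\infty)$, $\mu$ $\sigma$-finite, or $C(D)$ (sup-norm, pointwise order) for compact metric $D$ with Borel measure $\mu$; $X^\star$ dual, $\langle\cdot,\cdot\rangle$ pairing, $X_+$ nonnegative cone, $X^\star_{++}$ the functionals strictly positive on nonzero elements of $X_+$, $X^{b_0^\star}_{++}=\{f:\langle f,b_0^\star\rangle>0\}$. $L$ is closed, densely defined, generates a $C_0$-semigroup on $X$ preserving strict positivity; $L^\star$ its adjoint. $(Nz)(\theta)=\eta(\theta)z(\theta)$; $\eta,f:D\to(0,\infty)$ measurable; $\gamma\in(0,1)\cup(1,\infty)$; $\rho>0$. Assumptions: there exist $b_0^\star\in X^\star_{++}\cap D(L^\star)$, $\lambda_0^\star\in\mathbb R$ with $L^\star b_0^\star=\lambda_0^\star b_0^\star$; $\rho>\lambda_0^\star(1-\gamma)$; if $\gamma>1$, $(b_0^\star)^{1-\gamma}/f\in L^\infty$; if $X=C(D)$, $b_0^\star$ is a measure absolutely continuous w.r.t. $\mu$ with density denoted $b_0^\star$ and $b_0^\star,\eta,f\in C(D;(0,\infty))$;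 if $X=L^p$, $\eta,f\in L^\infty(D;(0,\infty))$, $\int_Df^{1/\gamma}(\eta b_0^\star)^{\frac{\gamma-1}{\gamma}}d\mu<\infty$ and $\int_D(f/(\eta b_0^\star))^{p/\gamma}d\mu<\infty$. $\alpha=\gamma^\gamma\big(\int_Df^{1/\gamma}(\eta b_0^\star)^{\frac{\gamma-1}{\gamma}}d\mu/(\rho-\lambda_0^\star(1-\gamma))\big)^\gamma$. For $c\in L^1_{loc}(\mathbb R_+;X)$, $x^{x_0,c}(t)=e^{tL}x_0-\int_0^te^{(t-s)L}Nc(s)ds$; $\mathcal A^{b_0^\star}_{++}(x_0)=\{c\in L^1_{loc}(\mathbb R_+;X_+):\langle x^{x_0,c}(t),b_0^\star\rangle>0\ \forall t\ge0\}$; $\mathcal J(c)=\int_0^\infty e^{-\rho t}\int_D\frac{c(t)(\theta)^{1-\gamma}}{1-\gamma}f(\theta)\mu(d\theta)\,dt$. *)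

theory Defs
  imports "HOL-Analysis.Analysis"
begin

text \<open>Which of the two admissible function spaces X is: L^p(D,mu) or C(D).
  The domain D is represented as the carrier (space M) of the measure M = mu.\<close>
datatype space_kind = Lp real | Cont

definition qe :: "space_kind \<Rightarrow> 'd measure \<Rightarrow> ('d \<Rightarrow> bool) \<Rightarrow> bool" where
  "qe k M P = (case k of Lp p \<Rightarrow> (AE \<theta> in M. P \<theta>) | Cont \<Rightarrow> (\<forall>\<theta>\<in>space M. P \<theta>))"

text \<open>The Banach space type 'x is (via rep) isometrically, linearly isomorphic to
  L^p(D,mu) (p in [1,oo), mu sigma-finite) resp. to C(D) with sup-norm (D compact metric,
  mu a Borel measure on D).  rep x is a function representing the element x.\<close>
definition is_realization ::
  "space_kind \<Rightarrow> 'd::metric_space measure \<Rightarrow> ('x::real_normed_vector \<Rightarrow> 'd \<Rightarrow> real) \<Rightarrow> bool" where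
  "is_realization k M rep = (
     (\<forall>x y. qe k M (\<lambda>\<theta>. rep (x + y) \<theta> = rep x \<theta> + rep y \<theta>)) \<and>
     (\<forall>a x. qe k M (\<lambda>\<theta>. rep (a *\<^sub>R x) \<theta> = a * rep x \<theta>)) \<and>
     (\<forall>x y. qe k M (\<lambda>\<theta>. rep x \<theta> = rep y \<theta>) \<longrightarrow> x = y) \<and>
     (case k of
        Lp p \<Rightarrow> 1 \<le> p \<and> sigma_finite_measure M \<and>
          (\<forall>x. rep x \<in> borel_measurable M \<and> integrable M (\<lambda>\<theta>. \<bar>rep x \<theta>\<bar> powr p) \<and>
               norm x = (\<integral>\<theta>. \<bar>rep x \<theta>\<bar> powr p \<partial>M) powr (1 / p)) \<and>
          (\<forall>g \<in> borel_measurable M. integrable M (\<lambda>\<theta>. \<bar>g \<theta>\<bar> powr p) \<longrightarrow>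
               (\<exists>x. AE \<theta> in M. rep x \<theta> = g \<theta>))
      | Cont \<Rightarrow> compact (space M) \<and> sets M = sets (restrict_space borel (space M)) \<and>
          (\<forall>x. continuous_on (space M) (rep x) \<and>
               norm x = Sup (insert 0 ((\<lambda>\<theta>. \<bar>rep x \<theta>\<bar>) ` space M))) \<and>
          (\<forall>g. continuous_on (space M) g \<longrightarrow> (\<exists>x. \<forall>\<theta>\<in>space M. rep x \<theta> = g \<theta>))))"

definition Xplus :: "space_kind \<Rightarrow> 'd measure \<Rightarrow> ('x \<Rightarrow> 'd \<Rightarrow> real) \<Rightarrow> 'x set" where
  "Xplus k M rep = {x. qe k M (\<lambda>\<theta>. 0 \<le> rep x \<theta>)}"

definition Xstar_pp :: "space_kind \<Rightarrow> 'd measure \<Rightarrow> ('x::real_normed_vector \<Rightarrow> 'd \<Rightarrow> real) \<Rightarrow> ('x \<Rightarrow> real) set" where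
  "Xstar_pp k M rep = {b. bounded_linear b \<and> (\<forall>x \<in> Xplus k M rep. x \<noteq> 0 \<longrightarrow> 0 < b x)}"

definition generates_C0 :: "'x::real_normed_vector set \<Rightarrow> ('x \<Rightarrow> 'x) \<Rightarrow> (real \<Rightarrow> 'x \<Rightarrow> 'x) \<Rightarrow> bool" where
  "generates_C0 DL L T = (
     (\<forall>t\<ge>0. bounded_linear (T t)) \<and> T 0 = id \<and>
     (\<forall>s\<ge>0. \<forall>t\<ge>0. T (s + t) = T s \<circ> T t) \<and>
     (\<forall>x. ((\<lambda>t. T t x) \<longlongrightarrow> x) (at_right 0)) \<and>
     DL = {x. \<exists>y. ((\<lambda>h. (1 / h) *\<^sub>R (T h x - x)) \<longlongrightarrow> y) (at_right 0)} \<and>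
     (\<forall>x\<in>DL. ((\<lambda>h. (1 / h) *\<^sub>R (T h x - x)) \<longlongrightarrow> L x) (at_right 0)))"

definition loc_bochner :: "(real \<Rightarrow> 'x::real_normed_vector) \<Rightarrow> bool" where
  "loc_bochner c = (\<forall>T\<ge>0.
     (\<exists>s. (\<forall>n. simple_function (restrict_space lborel {0..T}) (s n)) \<and>
          (AE t in lborel. t \<in> {0..T} \<longrightarrow> (\<lambda>n. s n t) \<longlonglongrightarrow> c t)) \<and>
     (\<integral>\<^sup>+ t\<in>{0..T}. ennreal (norm (c t)) \<partial>lborel) < \<infinity>)"

definition mild :: "(real \<Rightarrow> 'x \<Rightarrow> 'x) \<Rightarrow> ('x \<Rightarrow> 'x) \<Rightarrow> 'x \<Rightarrow> (real \<Rightarrow> 'x) \<Rightarrow> real \<Rightarrow> 'x::real_normed_vector" where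
  "mild T Nop x0 c t = T t x0 - integral {0..t} (\<lambda>s. T (t - s) (Nop (c s)))"

definition adm :: "space_kind \<Rightarrow> 'd measure \<Rightarrow> ('x::real_normed_vector \<Rightarrow> 'd \<Rightarrow> real) \<Rightarrow>
    (real \<Rightarrow> 'x \<Rightarrow> 'x) \<Rightarrow> ('x \<Rightarrow> 'x) \<Rightarrow> ('x \<Rightarrow> real) \<Rightarrow> 'x \<Rightarrow> (real \<Rightarrow> 'x) set" where
  "adm k M rep T Nop b0 x0 = {c. loc_bochner c \<and> (\<forall>t\<ge>0. c t \<in> Xplus k M rep) \<and>
       (\<forall>t\<ge>0. 0 < b0 (mild T Nop x0 c t))}"

definition upow :: "real \<Rightarrow> real \<Rightarrow> ennreal" where
  "upow \<gamma> y = (if 0 < y then ennreal (y powr (1 - \<gamma>)) else if \<gamma> < 1 then 0 else \<infinity>)"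

text \<open>The functional J(c) in [-oo, oo]; the integrand has the constant sign of 1 - gamma.\<close>
definition Jfun :: "'d measure \<Rightarrow> ('x \<Rightarrow> 'd \<Rightarrow> real) \<Rightarrow> ('d \<Rightarrow> real) \<Rightarrow> real \<Rightarrow> real \<Rightarrow> (real \<Rightarrow> 'x) \<Rightarrow> ereal" where
  "Jfun M rep f \<rho> \<gamma> c = (if \<gamma> < 1 then 1 else -1) *
     enn2ereal (\<integral>\<^sup>+ t\<in>{0..}. (\<integral>\<^sup>+ \<theta>. ennreal (exp (- \<rho> * t) * f \<theta> / \<bar>1 - \<gamma>\<bar>) * upow \<gamma> (rep (c t) \<theta>) \<partial>M) \<partial>lborel)"

definition alpha :: "'d measure \<Rightarrow> ('d \<Rightarrow> real) \<Rightarrow> ('d \<Rightarrow> real) \<Rightarrow> ('d \<Rightarrow> real) \<Rightarrow> real \<Rightarrow> real \<Rightarrow> real \<Rightarrow> real" where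
  "alpha M f eta beta \<rho> lam0 \<gamma> = \<gamma> powr \<gamma> *
     ((\<integral>\<theta>. f \<theta> powr (1 / \<gamma>) * (eta \<theta> * beta \<theta>) powr ((\<gamma> - 1) / \<gamma>) \<partial>M) / (\<rho> - lam0 * (1 - \<gamma>))) powr \<gamma>"

text \<open>v(x) = alpha <x,b0>^{1-gamma}/(1-gamma), as a function of s = <x,b0> > 0.\<close>
definition vfun :: "real \<Rightarrow> real \<Rightarrow> real \<Rightarrow> real" where
  "vfun \<alpha> \<gamma> s = \<alpha> * s powr (1 - \<gamma>) / (1 - \<gamma>)"

end

theory Submission
  imports Defs
begin


lemma ubp:
  fixes A :: "nat \<Rightarrow> 'x::banach \<Rightarrow> 'y::real_normed_vector"
  assumes lin: "\<And>n. bounded_linear (A n)" and pb: "\<And>z. \<exists>B. \<forall>n. norm (A n z) \<le> B"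
  shows "\<exists>C. \<forall>n z. norm (A n z) \<le> C * norm z"
proof -
  define F where "F m = {z. \<forall>n. norm (A n z) \<le> real m}" for m :: nat
  have clF: "closed (F m)" for m
  proof -
    have "F m = (\<Inter>n. {z. norm (A n z) \<le> real m})" by (auto simp: F_def)
    moreover have "closed {z. norm (A n z) \<le> real m}" for n
      by (intro closed_Collect_le continuous_intros linear_continuous_on lin continuous_on_const
            bounded_linear.continuous_on[OF lin] continuous_on_id)
    ultimately show ?thesis by auto
  qed
  have U: "(\<Union>m. F m) = UNIV"
  proof -
    { fix z
      obtain B where B: "\<forall>n. norm (A n z) \<le> B" using pb by blast
      obtain m :: nat where m: "B \<le> real m" using real_arch_simple by blast
      have "norm (A n z) \<le> real m" for n using spec[OF B, of n] m by linarith
      then have "z \<in> F m" unfolding F_def by blast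
      then have "z \<in> (\<Union>m. F m)" by blast }
    then show ?thesis by blast
  qed
  have "\<exists>m. interior (F m) \<noteq> {}"
  proof (rule ccontr)
    assume "\<not> ?thesis"
    then have "euclidean interior_of \<Union>(range F) = {}"
      by (intro Baire_category_alt) (auto simp: completely_metrizable_space_euclidean clF closed_closedin[symmetric])
    then show False using U by simp
  qed
  then obtain m z0 where "z0 \<in> interior (F m)" by blast
  then obtain r where r: "r > 0" "ball z0 r \<subseteq> F m" using mem_interior by blast
  have "norm (A n z) \<le> (4 * real m / r) * norm z" for n z
  proof (cases "z = 0")
    case True then show ?thesis using linear_0[OF bounded_linear.linear[OF lin]] by simp
  next
    case False
    define u where "u = (r / (2 * norm z)) *\<^sub>R z"
    have nu: "norm u = r / 2" using False r by (simp add: u_def)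
    have "z0 + u \<in> F m" using r nu by (intro subsetD[OF r(2)]) (simp add: dist_norm)
    moreover have "z0 \<in> F m" using r by (intro subsetD[OF r(2)]) simp
    ultimately have b: "norm (A n (z0 + u)) \<le> real m" "norm (A n z0) \<le> real m" by (auto simp: F_def)
    have eq: "A n u = A n (z0 + u) - A n z0"
      using linear_add[OF bounded_linear.linear[OF lin]] by simp
    have Au: "norm (A n u) \<le> 2 * real m"
    proof -
      have "norm (A n u) = norm (A n (z0 + u) - A n z0)" using eq by simp
      then show ?thesis using norm_triangle_ineq4[of "A n (z0 + u)" "A n z0"] b by linarith
    qed
    have "A n z = (2 * norm z / r) *\<^sub>R A n u"
      using False r by (simp add: u_def linear_scale[OF bounded_linear.linear[OF lin]])
    then have "norm (A n z) = (2 * norm z / r) * norm (A n u)" using r by simp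
    also have "\<dots> \<le> (2 * norm z / r) * (2 * real m)"
      using Au r by (intro mult_left_mono) auto
    finally show ?thesis by (simp add: field_simps)
  qed
  then show ?thesis by blast
qed



locale sg =
  fixes T :: "real \<Rightarrow> 'x::banach \<Rightarrow> 'x"
  assumes lin: "\<And>t. t \<ge> 0 \<Longrightarrow> bounded_linear (T t)"
    and T0: "T 0 = id"
    and Tadd: "\<And>s t. s \<ge> 0 \<Longrightarrow> t \<ge> 0 \<Longrightarrow> T (s + t) = T s \<circ> T t"
    and Tc: "\<And>x. ((\<lambda>t. T t x) \<longlongrightarrow> x) (at_right 0)"
begin

lemma Tcont0: "continuous (at 0 within {0..}) (\<lambda>t. T t x)"
  unfolding continuous_within at_within_Ici_at_right using Tc T0 by simp

lemma local_bound: "\<exists>d>0. \<exists>M. \<forall>h\<in>{0..d}. \<forall>z. norm (T h z) \<le> M * norm z"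
proof (rule ccontr)
  assume "\<not> ?thesis"
  note nb = this
  have "\<exists>h z. h \<in> {0..1/(real n + 1)} \<and> norm (T h z) > real n * norm z" for n :: nat
  proof -
    have d: "1/(real n + 1) > 0" by simp
    from nb d have "\<not> (\<forall>h\<in>{0..1/(real n + 1)}. \<forall>z. norm (T h z) \<le> real n * norm z)" by blast
    then show ?thesis by (auto simp: not_le)
  qed
  then have "\<forall>n. \<exists>h z. h \<in> {0..1/(real n + 1)} \<and> norm (T h z) > real n * norm z" by blast
  then obtain hs zs where "\<forall>n. hs n \<in> {0..1/(real n + 1)} \<and> norm (T (hs n) (zs n)) > real n * norm (zs n)"
    by metis
  then have hz: "\<And>n. hs n \<in> {0..1/(real n + 1)}" "\<And>n. norm (T (hs n) (zs n)) > real n * norm (zs n)"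
    by auto
  have hs0: "hs \<longlonglongrightarrow> 0"
  proof (rule tendsto_sandwich[of "\<lambda>_. 0" _ _ "\<lambda>n. 1/(real n + 1)"])
    show "\<forall>\<^sub>F n in sequentially. 0 \<le> hs n" "\<forall>\<^sub>F n in sequentially. hs n \<le> 1/(real n + 1)"
      using hz(1) by auto
    have "(\<lambda>n. 1 / (real n + 1)) = (\<lambda>n. inverse (real (Suc n)))" by (simp add: inverse_eq_divide add.commute)
    then show "(\<lambda>n. 1 / (real n + 1)) \<longlonglongrightarrow> 0" using LIMSEQ_inverse_real_of_nat by simp
  qed simp
  have "\<exists>B. \<forall>n. norm (T (hs n) z) \<le> B" for z
  proof -
    have "(\<lambda>n. T (hs n) z) \<longlonglongrightarrow> T 0 z"
      using Tcont0[of z] hs0 hz(1) unfolding continuous_within_sequentially o_def by auto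
    then have "Bseq (\<lambda>n. T (hs n) z)" by (rule convergent_imp_Bseq[OF convergentI])
    then show ?thesis unfolding Bseq_def by blast
  qed
  moreover have "bounded_linear (T (hs n))" for n using hz(1) lin by auto
  ultimately have "\<exists>C. \<forall>n z. norm (T (hs n) z) \<le> C * norm z" by (intro ubp) auto
  then obtain C where C: "\<And>n z. norm (T (hs n) z) \<le> C * norm z" by blast
  obtain n :: nat where "C \<le> real n" using real_arch_simple by blast
  then have "C * norm (zs n) \<le> real n * norm (zs n)" by (intro mult_right_mono) auto
  then show False using C[of n "zs n"] hz(2)[of n] by linarith
qed

lemma interval_bound: assumes "t \<ge> 0" shows "\<exists>C. \<forall>y\<in>{0..t}. \<forall>z. norm (T y z) \<le> C * norm z"
proof -
  obtain d M where dM: "d > 0" "\<And>h z. h\<in>{0..d} \<Longrightarrow> norm (T h z) \<le> M * norm z"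
    using local_bound by blast
  define M' where "M' = max 1 M"
  have M'1: "M' \<ge> 1" by (simp add: M'_def)
  have ind: "\<forall>y\<in>{0..real n * d}. \<forall>z. norm (T y z) \<le> M' ^ n * norm z" for n
  proof (induction n)
    case 0 then show ?case using T0 by simp
  next
    case (Suc n)
    show ?case
    proof (intro ballI allI)
      fix y z assume y: "y \<in> {0..real (Suc n) * d}"
      show "norm (T y z) \<le> M' ^ Suc n * norm z"
      proof (cases "y \<le> d")
        case True
        then have "norm (T y z) \<le> M * norm z" using dM(2)[of y] y by auto
        also have "\<dots> \<le> M' * norm z" by (intro mult_right_mono) (auto simp: M'_def)
        also have "\<dots> \<le> M' ^ Suc n * norm z"
        proof -
          have "M' ^ 1 \<le> M' ^ Suc n" by (rule power_increasing) (use M'1 in auto)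
          then show ?thesis by (intro mult_right_mono) auto
        qed
        finally show ?thesis .
      next
        case False
        have "y \<le> real n * d + d" using y by (simp add: algebra_simps)
        then have y1: "y - d \<in> {0..real n * d}" using False by auto
        have "T y z = T d (T (y - d) z)" using Tadd[of d "y - d"] y1 dM(1) by auto
        then have "norm (T y z) \<le> M * norm (T (y - d) z)" using dM(2)[of d] dM(1) by auto
        also have "\<dots> \<le> M' * norm (T (y - d) z)" by (intro mult_right_mono) (auto simp: M'_def)
        also have "\<dots> \<le> M' * (M' ^ n * norm z)" using Suc y1 M'1 by (intro mult_left_mono) auto
        finally show ?thesis by simp
      qed
    qed
  qed
  obtain n :: nat where "t / d \<le> real n" using real_arch_simple by blast
  then have "t \<le> real n * d" using dM(1) by (simp add: field_simps)
  then show ?thesis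
  proof (intro exI[of _ "M' ^ n"] ballI allI)
    fix y z assume "t \<le> real n * d" "y \<in> {0..t}"
    then have "y \<in> {0..real n * d}" by auto
    then show "norm (T y z) \<le> M' ^ n * norm z" using ind[of n] by blast
  qed
qed

end


locale sg2 = sg T for T :: "real \<Rightarrow> 'x::banach \<Rightarrow> 'x" +
  fixes DL L
  assumes DL: "DL = {x. \<exists>y. ((\<lambda>h. (1 / h) *\<^sub>R (T h x - x)) \<longlongrightarrow> y) (at_right 0)}"
    and DLL: "\<And>x. x\<in>DL \<Longrightarrow> ((\<lambda>h. (1 / h) *\<^sub>R (T h x - x)) \<longlongrightarrow> L x) (at_right 0)"
begin

lemma Ts: assumes "t \<ge> 0" shows "T t (a *\<^sub>R x) = a *\<^sub>R T t x" "T t (x - y) = T t x - T t y"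
  using bounded_linear.linear[OF lin[OF assms]] by (simp_all add: linear_scale linear_diff)

lemma Tcomm: assumes "s \<ge> 0" "t \<ge> 0" shows "T s (T t x) = T t (T s x)"
  using Tadd[OF assms] Tadd[OF assms(2,1)] by (metis add.commute comp_apply)

lemma Tcomp: assumes "s \<ge> 0" "t \<ge> 0" shows "T (s + t) x = T s (T t x)"
  using Tadd[OF assms] by simp

lemma commute:
  assumes x: "x \<in> DL" and t: "t \<ge> 0"
  shows "T t x \<in> DL" "L (T t x) = T t (L x)"
proof -
  have ev: "\<forall>\<^sub>F h in at_right 0. T t ((1 / h) *\<^sub>R (T h x - x)) = (1 / h) *\<^sub>R (T h (T t x) - T t x)"
  proof (rule eventually_mono[OF eventually_at_right_less])
    fix h :: real assume h: "0 < h"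
    have "T h (T t x) = T t (T h x)" using Tcomm[of h t] h t by simp
    then show "T t ((1 / h) *\<^sub>R (T h x - x)) = (1 / h) *\<^sub>R (T h (T t x) - T t x)"
      using Ts[OF t] by simp
  qed
  have lim: "((\<lambda>h. (1 / h) *\<^sub>R (T h (T t x) - T t x)) \<longlongrightarrow> T t (L x)) (at_right 0)"
    using bounded_linear.tendsto[OF lin[OF t] DLL[OF x]] ev by (rule Lim_transform_eventually)
  then show "T t x \<in> DL" unfolding DL by blast
  then show "L (T t x) = T t (L x)" using DLL lim tendsto_unique trivial_limit_at_right_real by blast
qed

lemma deriv:
  assumes x: "x \<in> DL" and t: "t > 0"
  shows "((\<lambda>y. (1 / (y - t)) *\<^sub>R (T y x - T t x)) \<longlongrightarrow> T t (L x)) (at t)"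
proof (rule filterlim_split_at)
  show "((\<lambda>y. (1 / (y - t)) *\<^sub>R (T y x - T t x)) \<longlongrightarrow> T t (L x)) (at_right t)"
    unfolding filterlim_at_right_to_0[of _ _ t]
  proof (rule Lim_transform_eventually[OF bounded_linear.tendsto[OF lin DLL[OF x]]])
    show "0 \<le> t" using t by simp
    show "\<forall>\<^sub>F h in at_right 0. T t ((1 / h) *\<^sub>R (T h x - x)) = (1 / (h + t - t)) *\<^sub>R (T (h + t) x - T t x)"
    proof (rule eventually_mono[OF eventually_at_right_less])
      fix h :: real assume h: "0 < h"
      have "T (h + t) x = T t (T h x)" using Tcomp[of t h] h t by (simp add: add.commute)
      then show "T t ((1 / h) *\<^sub>R (T h x - x)) = (1 / (h + t - t)) *\<^sub>R (T (h + t) x - T t x)"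
        using Ts[of t] t by simp
    qed
  qed
  have "\<exists>C. \<forall>y\<in>{0..t}. \<forall>z. norm (T y z) \<le> C * norm z" using interval_bound[of t] t by simp
  then obtain C where C0: "\<forall>y\<in>{0..t}. \<forall>z. norm (T y z) \<le> C * norm z" by blast
  have C: "\<And>y z. y \<in> {0..t} \<Longrightarrow> norm (T y z) \<le> C * norm z" using C0 by blast
  have q: "((\<lambda>h. (1 / h) *\<^sub>R (T h x - x) - L x) \<longlongrightarrow> 0) (at_right 0)"
    using DLL[OF x] by (simp add: Lim_null[symmetric])
  have r: "((\<lambda>h. T h (L x) - L x) \<longlongrightarrow> 0) (at_right 0)"
    using Tc[of "L x"] by (simp add: Lim_null[symmetric])
  have main: "((\<lambda>h. T (t - h) ((1 / h) *\<^sub>R (T h x - x)) - T t (L x)) \<longlongrightarrow> 0) (at_right 0)"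
  proof (rule Lim_null_comparison)
    show "((\<lambda>h. C * norm ((1 / h) *\<^sub>R (T h x - x) - L x) + C * norm (T h (L x) - L x)) \<longlongrightarrow> 0) (at_right 0)"
      using tendsto_add[OF tendsto_mult_right_zero[OF tendsto_norm_zero[OF q]] tendsto_mult_right_zero[OF tendsto_norm_zero[OF r]]]
      by (simp add: mult.commute)
    have "\<forall>\<^sub>F h in at_right 0. h < t" using t by (simp add: eventually_at_right_field) (metis)
    then show "\<forall>\<^sub>F h in at_right 0. norm (T (t - h) ((1 / h) *\<^sub>R (T h x - x)) - T t (L x))
        \<le> C * norm ((1 / h) *\<^sub>R (T h x - x) - L x) + C * norm (T h (L x) - L x)"
    proof (rule eventually_mono[OF eventually_conj[OF _ eventually_at_right_less]])
      fix h :: real assume h: "h < t \<and> 0 < h"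
      have th: "t - h \<in> {0..t}" using h by auto
      have Tth: "T t (L x) = T (t - h) (T h (L x))" using Tcomp[of "t - h" h] h by auto
      have "T (t - h) ((1 / h) *\<^sub>R (T h x - x)) - T t (L x)
          = T (t - h) ((1 / h) *\<^sub>R (T h x - x) - L x) - T (t - h) (T h (L x) - L x)"
        using Ts[of "t - h"] h Tth by simp
      then have "norm (T (t - h) ((1 / h) *\<^sub>R (T h x - x)) - T t (L x))
          \<le> norm (T (t - h) ((1 / h) *\<^sub>R (T h x - x) - L x)) + norm (T (t - h) (T h (L x) - L x))"
        by (simp add: norm_triangle_ineq4)
      also have "\<dots> \<le> C * norm ((1 / h) *\<^sub>R (T h x - x) - L x) + C * norm (T h (L x) - L x)"
        using C[OF th] by (intro add_mono) auto
      finally show "norm (T (t - h) ((1 / h) *\<^sub>R (T h x - x)) - T t (L x))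
          \<le> C * norm ((1 / h) *\<^sub>R (T h x - x) - L x) + C * norm (T h (L x) - L x)" .
    qed
  qed
  show "((\<lambda>y. (1 / (y - t)) *\<^sub>R (T y x - T t x)) \<longlongrightarrow> T t (L x)) (at_left t)"
    unfolding filterlim_at_left_to_right filterlim_at_right_to_0[of _ _ "-t"]
  proof (rule Lim_transform_eventually[OF main[unfolded Lim_null[symmetric]]])
    show "\<forall>\<^sub>F h in at_right 0. T (t - h) ((1 / h) *\<^sub>R (T h x - x)) = (1 / (- (h + - t) - t)) *\<^sub>R (T (- (h + - t)) x - T t x)"
    proof (rule eventually_mono[OF eventually_conj[OF _ eventually_at_right_less]])
      show "\<forall>\<^sub>F h in at_right 0. h < t" using t by (simp add: eventually_at_right_field) (metis)
      fix h :: real assume h: "h < t \<and> 0 < h"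
      have "T t x = T (t - h) (T h x)" using Tcomp[of "t - h" h] h by auto
      then have "(1 / (- (h + - t) - t)) *\<^sub>R (T (- (h + - t)) x - T t x) = (1 / h) *\<^sub>R (T (t - h) (T h x) - T (t - h) x)"
        by (simp add: scaleR_diff_right)
      also have "\<dots> = T (t - h) ((1 / h) *\<^sub>R (T h x - x))" using Ts[of "t - h"] h by simp
      finally show "T (t - h) ((1 / h) *\<^sub>R (T h x - x)) = (1 / (- (h + - t) - t)) *\<^sub>R (T (- (h + - t)) x - T t x)"
        by simp
    qed
  qed
qed

end


locale sg3 = sg2 T DL L for T :: "real \<Rightarrow> 'x::banach \<Rightarrow> 'x" and DL L +
  fixes b0 :: "'x \<Rightarrow> real" and lam0 :: real
  assumes b0lin: "bounded_linear b0" and eigen: "\<And>x. x \<in> DL \<Longrightarrow> b0 (L x) = lam0 * b0 x"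
    and dense: "closure DL = UNIV"
begin

lemma eig_DL:
  assumes x: "x \<in> DL" and t: "t > 0"
  shows "b0 (T t x) = exp (lam0 * t) * b0 x"
proof -
  define g where "g s = b0 (T s x)" for s
  have dg: "(g has_real_derivative lam0 * g s) (at s)" if s: "s > 0" for s
  proof -
    have l1: "((\<lambda>y. b0 ((1 / (y - s)) *\<^sub>R (T y x - T s x))) \<longlongrightarrow> b0 (T s (L x))) (at s)"
      by (rule bounded_linear.tendsto[OF b0lin deriv[OF x s]])
    have e1: "b0 ((1 / (y - s)) *\<^sub>R (T y x - T s x)) = (g y - g s) / (y - s)" for y
      using bounded_linear.linear[OF b0lin] by (simp add: g_def linear_scale linear_diff divide_inverse mult.commute)
    have e2: "b0 (T s (L x)) = lam0 * g s"
    proof -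
      have "b0 (T s (L x)) = b0 (L (T s x))" using commute(2)[OF x, of s] s by simp
      also have "\<dots> = lam0 * g s" using eigen[OF commute(1)[OF x, of s]] s by (simp add: g_def)
      finally show ?thesis .
    qed
    have "(\<lambda>y. b0 ((1 / (y - s)) *\<^sub>R (T y x - T s x))) = (\<lambda>y. (g y - g s) / (y - s))"
      by (rule ext) (rule e1)
    then have "((\<lambda>y. (g y - g s) / (y - s)) \<longlongrightarrow> lam0 * g s) (at s)" using l1 e2 by simp
    then show ?thesis by (rule has_field_derivative_iff[THEN iffD2])
  qed
  define h where "h s = exp (- lam0 * s) * g s" for s
  have dh: "DERIV h s :> 0" if "0 < s" "s < t" for s
  proof -
    have d1: "(g has_real_derivative lam0 * g s) (at s)" using dg that(1) by blast
    have d2: "((\<lambda>s. exp (- lam0 * s)) has_real_derivative exp (- lam0 * s) * (- lam0)) (at s)"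
      by (auto intro!: derivative_eq_intros)
    have "DERIV h s :> exp (- lam0 * s) * (- lam0) * g s + lam0 * g s * exp (- lam0 * s)"
      unfolding h_def by (rule DERIV_mult[OF d2 d1])
    then show ?thesis by (simp add: algebra_simps)
  qed
  have ch: "continuous_on {0..t} h"
  proof -
    have "continuous (at s within {0..t}) g" if s: "s \<in> {0..t}" for s
    proof (cases "s = 0")
      case True
      have "((\<lambda>s. b0 (T s x)) \<longlongrightarrow> b0 x) (at_right 0)"
        by (rule bounded_linear.tendsto[OF b0lin Tc])
      then show ?thesis using True t T0 by (simp add: continuous_within at_within_Icc_at_right g_def[abs_def])
    next
      case False
      then have "isCont g s" using dg[of s] s DERIV_isCont by auto
      then show ?thesis using continuous_at_imp_continuous_at_within by blast
    qed
    then have "continuous_on {0..t} g" using continuous_on_eq_continuous_within by blast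
    then show ?thesis unfolding h_def by (intro continuous_intros)
  qed
  have "h t = h 0" by (rule DERIV_isconst_end[OF t ch dh])
  then show ?thesis using T0 by (simp add: h_def g_def exp_minus field_simps)
qed

lemma eig:
  assumes t: "t \<ge> 0"
  shows "b0 (T t y) = exp (lam0 * t) * b0 y"
proof (cases "t = 0")
  case True then show ?thesis using T0 by simp
next
  case False
  then have t': "t > 0" using t by simp
  have "closed {y. b0 (T t y) = exp (lam0 * t) * b0 y}"
    by (intro closed_Collect_eq continuous_intros
        linear_continuous_on[OF lin[OF t]] continuous_on_compose2[OF linear_continuous_on[OF b0lin] linear_continuous_on[OF lin[OF t]]]
        linear_continuous_on[OF b0lin]) auto
  moreover have "DL \<subseteq> {y. b0 (T t y) = exp (lam0 * t) * b0 y}" using eig_DL t' by auto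
  ultimately have "closure DL \<subseteq> {y. b0 (T t y) = exp (lam0 * t) * b0 y}" by (rule closure_minimal[rotated])
  then show ?thesis using dense by auto
qed

end


lemma young_lam:
  fixes g l p q :: real
  assumes g: "g > 1" and l: "l > 0" and p: "p > 0" and q: "q > 0"
  shows "p powr (1/g) * q powr (1 - 1/g) \<le> (1/g) * (l powr (1 - g) * p) + (1 - 1/g) * (l * q)"
proof -
  have "(l powr (1 - g) * p) powr (1/g) * (l * q) powr (1 - 1/g)
      \<le> (1/g) * (l powr (1 - g) * p) + (1 - 1/g) * (l * q)"
    using g l p q by (intro Youngs_inequality_0) auto
  moreover have "(l powr (1 - g) * p) powr (1/g) * (l * q) powr (1 - 1/g) = p powr (1/g) * q powr (1 - 1/g)"
  proof -
    have "(l powr (1 - g) * p) powr (1/g) * (l * q) powr (1 - 1/g)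
        = (l powr ((1 - g) * (1/g)) * l powr (1 - 1/g)) * (p powr (1/g) * q powr (1 - 1/g))"
      using l p q by (simp add: powr_mult powr_powr)
    also have "l powr ((1 - g) * (1/g)) * l powr (1 - 1/g) = 1"
      using g l by (simp add: powr_add[symmetric] field_simps)
    finally show ?thesis by simp
  qed
  ultimately show ?thesis by simp
qed

lemma powr_ident:
  fixes g B x y :: real
  assumes g: "g > 1" and B: "B > 0" and x: "x > 0" and y: "y > 0"
  shows "(x * B powr (1 - g)) powr (1/g) * (y * B) powr (1 - 1/g) = x powr (1/g) * y powr (1 - 1/g)"
proof -
  have "(x * B powr (1 - g)) powr (1/g) * (y * B) powr (1 - 1/g)
      = (B powr ((1 - g) * (1/g)) * B powr (1 - 1/g)) * (x powr (1/g) * y powr (1 - 1/g))"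
    using B x y by (simp add: powr_mult powr_powr)
  also have "B powr ((1 - g) * (1/g)) * B powr (1 - 1/g) = 1"
    using g B by (simp add: powr_add[symmetric] field_simps)
  finally show ?thesis by simp
qed

lemma GL:
  fixes g c X U R :: real
  assumes g: "g > 1" and c: "c > 0" and X: "X > 0" and U: "U \<ge> 0" and R: "0 \<le> R" "R \<le> X"
   and ineq: "c \<le> (1/g) * ((c / (2*(1-1/g)*X)) powr (1-g) * U) + (1-1/g) * ((c/(2*(1-1/g)*X)) * R)"
  shows "c powr g * X powr (1-g) \<le> (2/g) * (2*(1-1/g)) powr (g-1) * U"
proof -
  define b where "b = 1 - 1/g"
  have b: "b > 0" using g by (simp add: b_def)
  define l where "l = c / (2*b*X)"
  have l: "l > 0" using b c X by (simp add: l_def)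
  have "b * (l * R) \<le> b * (l * X)" using b l R by (intro mult_left_mono) auto
  also have "\<dots> = c / 2" using b X by (simp add: l_def)
  finally have "c / 2 \<le> (1/g) * (l powr (1-g) * U)" using ineq unfolding b_def[symmetric] l_def[symmetric] by linarith
  also have "l powr (1-g) = c powr (1-g) * ((2*b) powr (g-1) * X powr (g-1))"
  proof -
    have e1: "l powr (1-g) = c powr (1-g) / ((2*b) powr (1-g) * X powr (1-g))"
      using c b X by (simp add: l_def powr_divide powr_mult)
    have e2: "(2*b) powr (g-1) = inverse ((2*b) powr (1-g))" using powr_minus[of "2*b" "1-g"] by simp
    have e3: "X powr (g-1) = inverse (X powr (1-g))" using powr_minus[of "X" "1-g"] by simp
    show ?thesis unfolding e1 e2 e3 by (simp add: field_simps)
  qed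
  finally have *: "c / 2 \<le> (1/g) * (c powr (1-g) * ((2*b) powr (g-1) * X powr (g-1)) * U)" .
  have "c powr g * X powr (1-g) = 2 * (c / 2) * (c powr (g-1) * X powr (1-g))"
    using c by (simp add: powr_diff powr_add field_simps)
  also have "\<dots> \<le> 2 * ((1/g) * (c powr (1-g) * ((2*b) powr (g-1) * X powr (g-1)) * U)) * (c powr (g-1) * X powr (1-g))"
    using * by (intro mult_right_mono mult_left_mono) auto
  also have "\<dots> = (2/g) * (2*b) powr (g-1) * U * ((c powr (1-g) * c powr (g-1)) * (X powr (g-1) * X powr (1-g)))"
    by (simp add: field_simps)
  also have "(c powr (1-g) * c powr (g-1)) = 1" using c by (simp add: powr_add[symmetric])
  also have "(X powr (g-1) * X powr (1-g)) = 1" using X by (simp add: powr_add[symmetric])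
  finally show ?thesis by (simp add: b_def)
qed



lemma upow_meas: assumes [measurable]: "a \<in> borel_measurable M" shows "(\<lambda>x. upow g (a x)) \<in> borel_measurable M"
  unfolding upow_def by measurable

lemma SL:
  fixes M :: "'d measure" and a f w :: "'d \<Rightarrow> real" and g K B :: real
  assumes g: "g > 1" and meas: "a \<in> borel_measurable M" "f \<in> borel_measurable M" "w \<in> borel_measurable M"
   and fpos: "\<And>\<theta>. \<theta> \<in> space M \<Longrightarrow> f \<theta> > 0" and wpos: "\<And>\<theta>. \<theta> \<in> space M \<Longrightarrow> w \<theta> > 0"
   and a0: "AE \<theta> in M. 0 \<le> a \<theta>"
   and intK: "integrable M (\<lambda>\<theta>. f \<theta> powr (1/g) * w \<theta> powr ((g-1)/g))"
   and K: "K = (\<integral>\<theta>. f \<theta> powr (1/g) * w \<theta> powr ((g-1)/g) \<partial>M)" "K > 0"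
   and intB: "integrable M (\<lambda>\<theta>. w \<theta> * a \<theta>)" and B: "B = (\<integral>\<theta>. w \<theta> * a \<theta> \<partial>M)"
  shows "(if B > 0 then ennreal (K powr g * B powr (1-g) / ((2/g) * (2*(1-1/g)) powr (g-1))) else \<infinity>)
     \<le> (\<integral>\<^sup>+\<theta>. ennreal (f \<theta>) * upow g (a \<theta>) \<partial>M)"
proof -
  define I where "I = (\<integral>\<^sup>+\<theta>. ennreal (f \<theta>) * upow g (a \<theta>) \<partial>M)"
  define k0 where "k0 = (2/g) * (2*(1-1/g)) powr (g-1)"
  have "2*(1-1/g) > 0" using g by (simp add: field_simps)
  then have "(2*(1-1/g)) powr (g-1) > 0" by (intro powr_gt_zero[THEN iffD2]) linarith
  then have k0: "k0 > 0" using g unfolding k0_def by (intro mult_pos_pos) auto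
  have wa0: "AE \<theta> in M. 0 \<le> w \<theta> * a \<theta>" using a0
  proof (rule AE_mp, intro AE_I2 impI)
    fix \<theta> assume "\<theta> \<in> space M" "0 \<le> a \<theta>"
    then show "0 \<le> w \<theta> * a \<theta>" using wpos[of \<theta>] by simp
  qed
  have B0: "B \<ge> 0" unfolding B by (rule integral_nonneg_AE[OF wa0])
  have key: "K \<le> (1/g) * (l powr (1 - g) * enn2real I) + (1 - 1/g) * (l * B)" if l: "l > 0" and Ifin: "I < \<infinity>" for l
  proof -
    have pw: "AE \<theta> in M. ennreal (f \<theta> powr (1/g) * w \<theta> powr ((g-1)/g))
       \<le> ennreal ((1/g) * l powr (1 - g)) * (ennreal (f \<theta>) * upow g (a \<theta>)) + ennreal ((1 - 1/g) * l) * ennreal (w \<theta> * a \<theta>)"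
      using a0
    proof (rule AE_mp, intro AE_I2 impI)
      fix \<theta> assume th: "\<theta> \<in> space M" and a: "0 \<le> a \<theta>"
      have f: "f \<theta> > 0" and w: "w \<theta> > 0" using fpos wpos th by auto
      have g1: "(g-1)/g = 1 - 1/g" using g by (simp add: field_simps)
      show "ennreal (f \<theta> powr (1/g) * w \<theta> powr ((g-1)/g))
       \<le> ennreal ((1/g) * l powr (1 - g)) * (ennreal (f \<theta>) * upow g (a \<theta>)) + ennreal ((1 - 1/g) * l) * ennreal (w \<theta> * a \<theta>)"
      proof (cases "a \<theta> > 0")
        case True
        have "f \<theta> powr (1/g) * w \<theta> powr ((g-1)/g) = (f \<theta> * a \<theta> powr (1 - g)) powr (1/g) * (w \<theta> * a \<theta>) powr (1 - 1/g)"
          using powr_ident[OF g True f w] g1 by simp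
        also have "\<dots> \<le> (1/g) * (l powr (1 - g) * (f \<theta> * a \<theta> powr (1 - g))) + (1 - 1/g) * (l * (w \<theta> * a \<theta>))"
          using True f w g l by (intro young_lam) auto
        finally have "ennreal (f \<theta> powr (1/g) * w \<theta> powr ((g-1)/g))
            \<le> ennreal ((1/g) * (l powr (1 - g) * (f \<theta> * a \<theta> powr (1 - g))) + (1 - 1/g) * (l * (w \<theta> * a \<theta>)))"
          by (rule ennreal_leI)
        also have "\<dots> = ennreal ((1/g) * l powr (1 - g)) * (ennreal (f \<theta>) * upow g (a \<theta>)) + ennreal ((1 - 1/g) * l) * ennreal (w \<theta> * a \<theta>)"
        proof -
          have u: "upow g (a \<theta>) = ennreal (a \<theta> powr (1-g))" using True by (simp add: upow_def)
          have c1: "0 \<le> (1/g) * l powr (1 - g)" "0 \<le> (1 - 1/g) * l" using g l by auto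
          have e1: "(1/g) * (l powr (1 - g) * (f \<theta> * a \<theta> powr (1 - g))) = ((1/g) * l powr (1 - g)) * (f \<theta> * a \<theta> powr (1 - g))"
            by (simp only: mult.assoc)
          have e2: "(1 - 1/g) * (l * (w \<theta> * a \<theta>)) = ((1 - 1/g) * l) * (w \<theta> * a \<theta>)"
            by (simp only: mult.assoc)
          have p1: "0 \<le> ((1/g) * l powr (1 - g)) * (f \<theta> * a \<theta> powr (1 - g))" by (rule mult_nonneg_nonneg[OF c1(1)]) (use f in simp)
          have p2: "0 \<le> ((1 - 1/g) * l) * (w \<theta> * a \<theta>)" by (rule mult_nonneg_nonneg[OF c1(2)]) (use w True in simp)
          show ?thesis unfolding e1 e2 u
            using ennreal_plus[OF p1 p2] ennreal_mult'[OF c1(1)] ennreal_mult'[OF c1(2)]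
                  ennreal_mult'[of "f \<theta>" "a \<theta> powr (1-g)"] f by simp
        qed
        finally show ?thesis .
      next
        case False
        then have "a \<theta> = 0" using a by simp
        then have "upow g (a \<theta>) = \<infinity>" using g by (simp add: upow_def)
        then have "ennreal ((1/g) * l powr (1 - g)) * (ennreal (f \<theta>) * upow g (a \<theta>)) = \<infinity>"
          using f g l by (simp add: ennreal_mult_top)
        then show ?thesis by simp
      qed
    qed
    have "ennreal K = (\<integral>\<^sup>+\<theta>. ennreal (f \<theta> powr (1/g) * w \<theta> powr ((g-1)/g)) \<partial>M)"
      unfolding K by (rule nn_integral_eq_integral[symmetric, OF intK]) auto
    also have "\<dots> \<le> (\<integral>\<^sup>+\<theta>. ennreal ((1/g) * l powr (1 - g)) * (ennreal (f \<theta>) * upow g (a \<theta>)) + ennreal ((1 - 1/g) * l) * ennreal (w \<theta> * a \<theta>) \<partial>M)"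
      by (rule nn_integral_mono_AE[OF pw])
    also have "\<dots> = ennreal ((1/g) * l powr (1 - g)) * I + ennreal ((1 - 1/g) * l) * (\<integral>\<^sup>+\<theta>. ennreal (w \<theta> * a \<theta>) \<partial>M)"
      unfolding I_def using meas upow_meas[OF meas(1)] by (subst nn_integral_add) (auto simp: nn_integral_cmult)
    also have "(\<integral>\<^sup>+\<theta>. ennreal (w \<theta> * a \<theta>) \<partial>M) = ennreal B"
      unfolding B by (intro nn_integral_eq_integral intB wa0)
    also have "I = ennreal (enn2real I)" using Ifin by simp
    finally have i1: "ennreal K \<le> ennreal ((1/g) * l powr (1 - g)) * ennreal (enn2real I) + ennreal ((1 - 1/g) * l) * ennreal B" .
    have nn1: "0 \<le> (1/g) * l powr (1 - g)" "0 \<le> (1 - 1/g) * l" using g l by auto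
    have p1: "0 \<le> (1/g) * l powr (1 - g) * enn2real I" by (rule mult_nonneg_nonneg[OF nn1(1)]) simp
    have p2: "0 \<le> (1 - 1/g) * l * B" by (rule mult_nonneg_nonneg[OF nn1(2) B0])
    have "ennreal ((1/g) * l powr (1 - g)) * ennreal (enn2real I) + ennreal ((1 - 1/g) * l) * ennreal B
        = ennreal ((1/g) * l powr (1 - g) * enn2real I + (1 - 1/g) * l * B)"
      by (simp only: ennreal_plus[OF p1 p2] ennreal_mult'[OF nn1(1)] ennreal_mult'[OF nn1(2)])
    with i1 have "ennreal K \<le> ennreal ((1/g) * l powr (1 - g) * enn2real I + (1 - 1/g) * l * B)" by simp
    then have "K \<le> (1/g) * l powr (1 - g) * enn2real I + (1 - 1/g) * l * B"
      using ennreal_le_iff[OF add_nonneg_nonneg[OF p1 p2]] by simp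
    then show ?thesis by (simp add: mult.assoc)
  qed
  show ?thesis
  proof (cases "I < \<infinity>")
    case False
    then have "I = \<infinity>" by (simp add: less_top[symmetric])
    then show ?thesis unfolding I_def[symmetric] by simp
  next
    case True
    have Ir: "enn2real I \<ge> 0" by simp
    show ?thesis
    proof (cases "B > 0")
      case Bp: True
      have "K powr g * B powr (1-g) \<le> k0 * enn2real I"
      proof -
        have "2*(1-1/g) > 0" using g by (simp add: field_simps)
        then have lp: "0 < K / (2*(1-1/g)*B)" using K(2) Bp by simp
        show ?thesis unfolding k0_def by (rule GL[OF g K(2) Bp Ir B0 order_refl key[OF lp True]])
      qed
      then have "K powr g * B powr (1-g) / k0 \<le> enn2real I" using k0 by (simp add: field_simps)
      then have "ennreal (K powr g * B powr (1-g) / k0) \<le> ennreal (enn2real I)" by (rule ennreal_leI)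
      also have "ennreal (enn2real I) = I" using True by simp
      finally have "ennreal (K powr g * B powr (1-g) / k0) \<le> I" .
      then show ?thesis using Bp unfolding I_def k0_def by simp
    next
      case Bz: False
      then have B00: "B = 0" using B0 by simp
      have all: "K powr g * X powr (1-g) \<le> k0 * enn2real I" if X: "X > 0" for X
      proof -
        have "2*(1-1/g) > 0" using g by (simp add: field_simps)
        then have lp: "0 < K / (2*(1-1/g)*X)" using K(2) X by simp
        have kk: "K \<le> (1/g) * ((K / (2*(1-1/g)*X)) powr (1-g) * enn2real I) + (1-1/g) * ((K / (2*(1-1/g)*X)) * 0)"
          using key[OF lp True] B00 by simp
        show ?thesis unfolding k0_def by (rule GL[OF g K(2) X Ir order_refl less_imp_le[OF X] kk])
      qed
      define X where "X = (k0 * enn2real I / K powr g + 1) powr (1 / (1 - g))"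
      have "0 \<le> k0 * enn2real I / K powr g" using k0 by (intro divide_nonneg_nonneg mult_nonneg_nonneg) auto
      then have pos: "k0 * enn2real I / K powr g + 1 > 0" by linarith
      have X: "X > 0" using pos by (simp add: X_def)
      have "X powr (1 - g) = k0 * enn2real I / K powr g + 1"
        using pos g by (simp add: X_def powr_powr)
      then have "K powr g * X powr (1 - g) = k0 * enn2real I + K powr g" using K(2)
        by (simp add: field_simps)
      then show ?thesis using all[OF X] K(2) by simp
    qed
  qed
qed

lemma qe_AE: "qe k M P \<Longrightarrow> AE \<theta> in M. P \<theta>"
  by (cases k) (auto simp: qe_def intro: AE_I2)

lemma qe_mp2:
  assumes "qe k M P" "qe k M Q" "\<And>\<theta>. \<theta> \<in> space M \<Longrightarrow> P \<theta> \<Longrightarrow> Q \<theta> \<Longrightarrow> R \<theta>"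
  shows "qe k M R"
proof (cases k)
  case (Lp p)
  then have "AE \<theta> in M. P \<theta>" "AE \<theta> in M. Q \<theta>" using assms by (auto simp: qe_def)
  then have "AE \<theta> in M. R \<theta>" using AE_space by eventually_elim (use assms(3) in auto)
  then show ?thesis using Lp by (simp add: qe_def)
next
  case Cont then show ?thesis using assms by (auto simp: qe_def)
qed

lemma rep_meas:
  assumes "is_realization k M rep" shows "rep x \<in> borel_measurable M"
proof (cases k)
  case (Lp p) then show ?thesis using assms by (auto simp: is_realization_def)
next
  case Cont
  then have "continuous_on (space M) (rep x)" "sets M = sets (restrict_space borel (space M))"
    using assms by (auto simp: is_realization_def)
  then show ?thesis
    using borel_measurable_continuous_on_restrict measurable_cong_sets by blast
qed

lemma gen_sg:
  assumes "generates_C0 DL L T" "closure DL = UNIV" "bounded_linear b0" "\<forall>x\<in>DL. b0 (L x) = lam0 * b0 x"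
  shows "sg3 T DL L b0 lam0"
  using assms unfolding generates_C0_def sg3_def sg2_def sg_def sg2_axioms_def sg3_axioms_def by auto


theorem lemma3p8:
  fixes k :: space_kind and M :: "'d::metric_space measure"
    and rep :: "'x::banach \<Rightarrow> 'd \<Rightarrow> real"
    and DL :: "'x set" and L :: "'x \<Rightarrow> 'x" and T :: "real \<Rightarrow> 'x \<Rightarrow> 'x"
    and Nop :: "'x \<Rightarrow> 'x" and b0 :: "'x \<Rightarrow> real"
    and beta eta f :: "'d \<Rightarrow> real" and lam0 \<rho> \<gamma> :: real and x0 :: 'x
  assumes X: "is_realization k M rep"
    and gen: "generates_C0 DL L T"
    and closed_dense: "closure DL = UNIV" "closed {(x, L x) | x. x \<in> DL}"
    and pos: "\<forall>t\<ge>0. \<forall>x \<in> Xplus k M rep - {0}. T t x \<in> Xplus k M rep - {0}"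
    and N: "\<forall>z. qe k M (\<lambda>\<theta>. rep (Nop z) \<theta> = eta \<theta> * rep z \<theta>)"
    and eta: "eta \<in> borel_measurable M" "\<forall>\<theta>\<in>space M. 0 < eta \<theta>"
    and f: "f \<in> borel_measurable M" "\<forall>\<theta>\<in>space M. 0 < f \<theta>"
    and b0: "b0 \<in> Xstar_pp k M rep" "\<forall>x\<in>DL. b0 (L x) = lam0 * b0 x"
    and dens: "beta \<in> borel_measurable M" "\<forall>\<theta>\<in>space M. 0 < beta \<theta>"
      "\<forall>x. integrable M (\<lambda>\<theta>. rep x \<theta> * beta \<theta>) \<and> b0 x = (\<integral>\<theta>. rep x \<theta> * beta \<theta> \<partial>M)"
    and gam: "0 < \<gamma>" "\<gamma> \<noteq> 1"
    and rho: "0 < \<rho>" "lam0 * (1 - \<gamma>) < \<rho>"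
    and gam_gt1: "1 < \<gamma> \<longrightarrow> (\<exists>C. AE \<theta> in M. beta \<theta> powr (1 - \<gamma>) / f \<theta> \<le> C)"
    and Ccase: "k = Cont \<longrightarrow> continuous_on (space M) beta \<and> continuous_on (space M) eta \<and>
                             continuous_on (space M) f"
    and Lpcase: "\<forall>p. k = Lp p \<longrightarrow>
        (\<exists>C. AE \<theta> in M. eta \<theta> \<le> C) \<and> (\<exists>C. AE \<theta> in M. f \<theta> \<le> C) \<and>
        integrable M (\<lambda>\<theta>. f \<theta> powr (1 / \<gamma>) * (eta \<theta> * beta \<theta>) powr ((\<gamma> - 1) / \<gamma>)) \<and>
        integrable M (\<lambda>\<theta>. (f \<theta> / (eta \<theta> * beta \<theta>)) powr (p / \<gamma>))"
    and x0: "0 < b0 x0"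
  shows "\<forall>c \<in> adm k M rep T Nop b0 x0. - \<infinity> < Jfun M rep f \<rho> \<gamma> c \<longrightarrow>
           ((\<lambda>n::nat. exp (- \<rho> * real n) *
               vfun (alpha M f eta beta \<rho> lam0 \<gamma>) \<gamma> (b0 (mild T Nop x0 c (real n)))) \<longlongrightarrow> 0) sequentially"
proof (intro ballI impI)
  fix c assume cA: "c \<in> adm k M rep T Nop b0 x0" and J: "- \<infinity> < Jfun M rep f \<rho> \<gamma> c"
  have cpos: "\<And>s. s \<ge> 0 \<Longrightarrow> c s \<in> Xplus k M rep"
    and mpos: "\<And>t. t \<ge> 0 \<Longrightarrow> 0 < b0 (mild T Nop x0 c t)" using cA by (auto simp: adm_def)
  have b0lin: "bounded_linear b0" using b0 by (simp add: Xstar_pp_def)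
  interpret sg3 T DL L b0 lam0
    using gen_sg[OF gen closed_dense(1) b0lin b0(2)] .
  have b0pos: "\<And>y. y \<in> Xplus k M rep \<Longrightarrow> 0 \<le> b0 y"
  proof -
    fix y assume y: "y \<in> Xplus k M rep"
    show "0 \<le> b0 y"
    proof (cases "y = 0")
      case True then show ?thesis using linear_0[OF bounded_linear.linear[OF b0lin]] by simp
    next
      case False then show ?thesis using b0(1) y by (auto simp: Xstar_pp_def intro: less_imp_le)
    qed
  qed
  have NX: "\<And>y. y \<in> Xplus k M rep \<Longrightarrow> Nop y \<in> Xplus k M rep"
  proof -
    fix y assume "y \<in> Xplus k M rep"
    then have "qe k M (\<lambda>\<theta>. 0 \<le> rep y \<theta>)" by (simp add: Xplus_def)
    then have "qe k M (\<lambda>\<theta>. 0 \<le> rep (Nop y) \<theta>)"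
      by (rule qe_mp2[OF N[rule_format, of y]]) (use eta(2) in auto)
    then show "Nop y \<in> Xplus k M rep" by (simp add: Xplus_def)
  qed
  define Bf where "Bf s = b0 (Nop (c s))" for s
  have Bnn: "\<And>s. s \<ge> 0 \<Longrightarrow> 0 \<le> Bf s" unfolding Bf_def using b0pos NX cpos by blast
  define G where "G s = exp (- lam0 * s) * Bf s" for s
  have Gnn: "\<And>s. s \<ge> 0 \<Longrightarrow> 0 \<le> G s" unfolding G_def using Bnn by simp
  define P where "P t \<longleftrightarrow> (\<lambda>s. T (t - s) (Nop (c s))) integrable_on {0..t}" for t
  have mildP: "G integrable_on {0..t} \<and> b0 (mild T Nop x0 c t) = exp (lam0 * t) * (b0 x0 - integral {0..t} G)"
    if t: "t \<ge> 0" and Pt: "P t" for t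
  proof -
    define Fv where "Fv s = T (t - s) (Nop (c s))" for s
    have Fi: "Fv integrable_on {0..t}" using Pt by (simp add: P_def Fv_def[abs_def])
    have bi: "(b0 \<circ> Fv) integrable_on {0..t}" by (rule integrable_linear[OF Fi b0lin])
    have bF: "(b0 \<circ> Fv) s = exp (lam0 * t) * G s" if s: "s \<in> {0..t}" for s
    proof -
      have "(b0 \<circ> Fv) s = exp (lam0 * (t - s)) * Bf s" using eig[of "t - s" "Nop (c s)"] s
        by (simp add: Fv_def Bf_def)
      also have "\<dots> = exp (lam0 * t) * G s" by (simp add: G_def algebra_simps exp_diff exp_minus field_simps)
      finally show ?thesis .
    qed
    have Gi: "G integrable_on {0..t}"
    proof (rule integrable_eq[OF integrable_cmul[OF bi, of "exp (- lam0 * t)"]])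
      fix s assume "s \<in> {0..t}"
      then show "exp (- lam0 * t) *\<^sub>R (b0 \<circ> Fv) s = G s" using bF[of s] by (simp add: exp_minus field_simps)
    qed
    have "b0 (integral {0..t} Fv) = integral {0..t} (b0 \<circ> Fv)" by (rule integral_linear[symmetric, OF Fi b0lin])
    also have "\<dots> = integral {0..t} (\<lambda>s. exp (lam0 * t) *\<^sub>R G s)" by (rule integral_cong) (use bF in simp)
    also have "\<dots> = exp (lam0 * t) * integral {0..t} G" by (simp only: integral_cmul) simp
    finally have "b0 (integral {0..t} Fv) = exp (lam0 * t) * integral {0..t} G" .
    moreover have "b0 (mild T Nop x0 c t) = b0 (T t x0) - b0 (integral {0..t} Fv)"
      unfolding mild_def Fv_def using linear_diff[OF bounded_linear.linear[OF b0lin]] by simp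
    ultimately show ?thesis using Gi eig[OF t] by (simp add: algebra_simps)
  qed
  have mildN: "b0 (mild T Nop x0 c t) = exp (lam0 * t) * b0 x0" if t: "t \<ge> 0" and Pt: "\<not> P t" for t
  proof -
    have "integral {0..t} (\<lambda>s. T (t - s) (Nop (c s))) = 0" using Pt not_integrable_integral by (simp add: P_def)
    then show ?thesis using eig[OF t] by (simp add: mild_def)
  qed
  have mle: "b0 (mild T Nop x0 c t) \<le> exp (lam0 * t) * b0 x0" if t: "t \<ge> 0" for t
  proof (cases "P t")
    case True
    then have "G integrable_on {0..t}" and e: "b0 (mild T Nop x0 c t) = exp (lam0 * t) * (b0 x0 - integral {0..t} G)"
      using mildP t by auto
    then have "0 \<le> integral {0..t} G" using Gnn by (intro integral_nonneg) auto
    then show ?thesis using e by (simp add: mult_left_mono)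
  qed (use mildN t in simp)
  define \<delta> where "\<delta> = \<rho> - lam0 * (1 - \<gamma>)"
  have \<delta>: "\<delta> > 0" using rho by (simp add: \<delta>_def)
  define \<alpha> where "\<alpha> = alpha M f eta beta \<rho> lam0 \<gamma>"
  have \<alpha>0: "\<alpha> \<ge> 0" by (simp add: \<alpha>_def alpha_def)
  have termeq: "exp (- \<rho> * t) * vfun \<alpha> \<gamma> S = \<alpha> / (1 - \<gamma>) * (exp (- \<rho> * t) * S powr (1 - \<gamma>))" for t S
    by (simp add: vfun_def)
  have expid: "exp (- \<rho> * t) * (exp (lam0 * t) * Y) powr (1 - \<gamma>) = exp (- \<delta> * t) * Y powr (1 - \<gamma>)"
    if "Y \<ge> 0" for t Y
    using that by (cases "Y = 0") (simp_all add: powr_mult powr_def exp_add[symmetric] \<delta>_def algebra_simps ln_mult)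
  have explim: "(\<lambda>n::nat. C * exp (- \<delta> * real n)) \<longlonglongrightarrow> 0" for C
  proof -
    have "(\<lambda>n::nat. exp (- \<delta>) ^ n) \<longlonglongrightarrow> 0" using \<delta> by (intro LIMSEQ_power_zero) simp
    then have "(\<lambda>n::nat. C * exp (- \<delta>) ^ n) \<longlonglongrightarrow> 0" by (rule tendsto_mult_right_zero)
    then show ?thesis by (simp add: exp_of_nat_mult[symmetric] mult.commute)
  qed
  show "((\<lambda>n::nat. exp (- \<rho> * real n) *
               vfun (alpha M f eta beta \<rho> lam0 \<gamma>) \<gamma> (b0 (mild T Nop x0 c (real n)))) \<longlongrightarrow> 0) sequentially"
    unfolding \<alpha>_def[symmetric] termeq
  proof (cases "\<gamma> < 1")
    case True
    show "(\<lambda>n. \<alpha> / (1 - \<gamma>) * (exp (- \<rho> * real n) * b0 (mild T Nop x0 c (real n)) powr (1 - \<gamma>))) \<longlonglongrightarrow> 0"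
    proof (rule tendsto_sandwich[OF _ _ tendsto_const explim[of "\<alpha> / (1 - \<gamma>) * b0 x0 powr (1 - \<gamma>)"]])
      show "\<forall>\<^sub>F n in sequentially. 0 \<le> \<alpha> / (1 - \<gamma>) * (exp (- \<rho> * real n) * b0 (mild T Nop x0 c (real n)) powr (1 - \<gamma>))"
        using True \<alpha>0 by (intro always_eventually allI mult_nonneg_nonneg) auto
      show "\<forall>\<^sub>F n in sequentially. \<alpha> / (1 - \<gamma>) * (exp (- \<rho> * real n) * b0 (mild T Nop x0 c (real n)) powr (1 - \<gamma>))
           \<le> \<alpha> / (1 - \<gamma>) * b0 x0 powr (1 - \<gamma>) * exp (- \<delta> * real n)"
      proof (intro always_eventually allI)
        fix n :: nat
        have "b0 (mild T Nop x0 c (real n)) powr (1 - \<gamma>) \<le> (exp (lam0 * real n) * b0 x0) powr (1 - \<gamma>)"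
          using mle[of "real n"] mpos[of "real n"] True by (intro powr_mono2) auto
        then have "exp (- \<rho> * real n) * b0 (mild T Nop x0 c (real n)) powr (1 - \<gamma>) \<le> exp (- \<delta> * real n) * b0 x0 powr (1 - \<gamma>)"
          using expid[of "b0 x0" "real n"] x0 by (metis exp_gt_zero less_imp_le mult_le_cancel_left_pos)
        moreover have "\<alpha> / (1 - \<gamma>) \<ge> 0" using True \<alpha>0 by simp
        ultimately have "\<alpha> / (1 - \<gamma>) * (exp (- \<rho> * real n) * b0 (mild T Nop x0 c (real n)) powr (1 - \<gamma>))
           \<le> \<alpha> / (1 - \<gamma>) * (exp (- \<delta> * real n) * b0 x0 powr (1 - \<gamma>))" by (rule mult_left_mono)
        also have "\<dots> = \<alpha> / (1 - \<gamma>) * b0 x0 powr (1 - \<gamma>) * exp (- \<delta> * real n)" by (simp only: ac_simps)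
        finally show "\<alpha> / (1 - \<gamma>) * (exp (- \<rho> * real n) * b0 (mild T Nop x0 c (real n)) powr (1 - \<gamma>))
           \<le> \<alpha> / (1 - \<gamma>) * b0 x0 powr (1 - \<gamma>) * exp (- \<delta> * real n)" .
      qed
    qed
  next
    case False
    then have g1: "\<gamma> > 1" using gam by simp
    define K where "K = (\<integral>\<theta>. f \<theta> powr (1/\<gamma>) * (eta \<theta> * beta \<theta>) powr ((\<gamma>-1)/\<gamma>) \<partial>M)"
    have \<alpha>K: "\<alpha> = \<gamma> powr \<gamma> * (K / \<delta>) powr \<gamma>" by (simp add: \<alpha>_def alpha_def K_def \<delta>_def)
    show "(\<lambda>n. \<alpha> / (1 - \<gamma>) * (exp (- \<rho> * real n) * b0 (mild T Nop x0 c (real n)) powr (1 - \<gamma>))) \<longlonglongrightarrow> 0"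
    proof (cases "integrable M (\<lambda>\<theta>. f \<theta> powr (1/\<gamma>) * (eta \<theta> * beta \<theta>) powr ((\<gamma>-1)/\<gamma>)) \<and> K > 0")
      case False
      have "K \<ge> 0" unfolding K_def by (rule Bochner_Integration.integral_nonneg) simp
      have "K = 0"
      proof (cases "integrable M (\<lambda>\<theta>. f \<theta> powr (1/\<gamma>) * (eta \<theta> * beta \<theta>) powr ((\<gamma>-1)/\<gamma>))")
        case True then show ?thesis using False \<open>K \<ge> 0\<close> by simp
      next
        case False then show ?thesis unfolding K_def by (rule not_integrable_integral_eq)
      qed
      then have "\<alpha> = 0" by (simp add: \<alpha>K)
      then show ?thesis by simp
    next
      case True
      then have intK: "integrable M (\<lambda>\<theta>. f \<theta> powr (1/\<gamma>) * (eta \<theta> * beta \<theta>) powr ((\<gamma>-1)/\<gamma>))" and Kp: "K > 0" by auto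
      show ?thesis
      proof (cases "\<exists>N. \<forall>n\<ge>N. \<not> P (real n)")
        case True
        then obtain N where N: "\<And>n. n \<ge> N \<Longrightarrow> \<not> P (real n)" by blast
        have "\<forall>\<^sub>F n in sequentially. \<alpha> / (1 - \<gamma>) * b0 x0 powr (1 - \<gamma>) * exp (- \<delta> * real n)
            = \<alpha> / (1 - \<gamma>) * (exp (- \<rho> * real n) * b0 (mild T Nop x0 c (real n)) powr (1 - \<gamma>))"
        proof (rule eventually_sequentiallyI[of N])
          fix n assume "N \<le> n"
          then have "b0 (mild T Nop x0 c (real n)) = exp (lam0 * real n) * b0 x0" using N mildN by simp
          then show "\<alpha> / (1 - \<gamma>) * b0 x0 powr (1 - \<gamma>) * exp (- \<delta> * real n)
            = \<alpha> / (1 - \<gamma>) * (exp (- \<rho> * real n) * b0 (mild T Nop x0 c (real n)) powr (1 - \<gamma>))"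
            using expid[of "b0 x0" "real n"] x0 by simp
        qed
        then show ?thesis by (rule Lim_transform_eventually[OF explim])
      next
        case False
        then have inf: "\<And>N. \<exists>n\<ge>N. P (real n)" by auto
        have bigP: "\<exists>n::nat. real n \<ge> m \<and> P (real n)" for m :: real
        proof -
          obtain N :: nat where "m \<le> real N" using real_arch_simple by blast
          moreover obtain n where "n \<ge> N" "P (real n)" using inf by blast
          ultimately show ?thesis by (intro exI[of _ n]) auto
        qed
        have Gint: "G integrable_on {0..m}" if m: "m \<ge> 0" for m
        proof -
          obtain n :: nat where n: "real n \<ge> m" "P (real n)" using bigP by blast
          then have "G integrable_on {0..real n}" using mildP by auto
          then show ?thesis by (rule integrable_subinterval_real) (use n in auto)
        qed
        define Xn where "Xn t = b0 x0 - integral {0..t} G" for t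
        have Xmono: "Xn t \<le> Xn s" if "0 \<le> s" "s \<le> t" for s t
        proof -
          have "integral {0..s} G \<le> integral {0..t} G"
            using that Gint Gnn by (intro integral_subset_le) auto
          then show ?thesis by (simp add: Xn_def)
        qed
        have Xpos: "Xn t > 0" if t: "t \<ge> 0" for t
        proof -
          obtain n :: nat where n: "real n \<ge> t" "P (real n)" using bigP by blast
          then have "b0 (mild T Nop x0 c (real n)) = exp (lam0 * real n) * Xn (real n)"
            using mildP[of "real n"] by (simp add: Xn_def)
          then have "Xn (real n) > 0" using mpos[of "real n"] by (simp add: zero_less_mult_iff)
          then show ?thesis using Xmono[of t "real n"] t n by simp
        qed
        have mge: "exp (lam0 * t) * Xn t \<le> b0 (mild T Nop x0 c t)" if t: "t \<ge> 0" for t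
        proof (cases "P t")
          case True then show ?thesis using mildP[OF t] by (simp add: Xn_def)
        next
          case False
          have "0 \<le> integral {0..t} G" using Gint[OF t] Gnn by (intro integral_nonneg) auto
          then show ?thesis using mildN[OF t False] by (simp add: Xn_def mult_left_mono)
        qed
        have bnd: "norm (\<alpha> / (1 - \<gamma>) * (exp (- \<rho> * real n) * b0 (mild T Nop x0 c (real n)) powr (1 - \<gamma>)))
            \<le> \<alpha> / (\<gamma> - 1) * (exp (- \<delta> * real n) * Xn (real n) powr (1 - \<gamma>))" for n :: nat
        proof -
          have Xp: "Xn (real n) > 0" using Xpos by simp
          have "b0 (mild T Nop x0 c (real n)) powr (1 - \<gamma>) \<le> (exp (lam0 * real n) * Xn (real n)) powr (1 - \<gamma>)"
            using mge[of "real n"] Xp g1 by (intro powr_mono2') auto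
          then have le: "exp (- \<rho> * real n) * b0 (mild T Nop x0 c (real n)) powr (1 - \<gamma>) \<le> exp (- \<delta> * real n) * Xn (real n) powr (1 - \<gamma>)"
            using expid[of "Xn (real n)" "real n"] Xp by (metis exp_gt_zero less_imp_le mult_le_cancel_left_pos)
          have "norm (\<alpha> / (1 - \<gamma>) * (exp (- \<rho> * real n) * b0 (mild T Nop x0 c (real n)) powr (1 - \<gamma>)))
              = \<alpha> / (\<gamma> - 1) * (exp (- \<rho> * real n) * b0 (mild T Nop x0 c (real n)) powr (1 - \<gamma>))"
            using g1 \<alpha>0 by (simp add: abs_mult divide_simps)
          also have "\<dots> \<le> \<alpha> / (\<gamma> - 1) * (exp (- \<delta> * real n) * Xn (real n) powr (1 - \<gamma>))"
            using le g1 \<alpha>0 by (intro mult_left_mono) auto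
          finally show ?thesis .
        qed
        have main: "(\<lambda>n::nat. exp (- \<delta> * real n) * Xn (real n) powr (1 - \<gamma>)) \<longlonglongrightarrow> 0"
        proof -
          define G0 where "G0 s = indicator {0..} s * G s" for s :: real
          have G0m: "G0 \<in> borel_measurable lebesgue"
          proof (rule borel_measurable_LIMSEQ_real[where u="\<lambda>m s. indicator {0..real m} s * G s"])
            fix s :: real
            obtain N :: nat where N: "s \<le> real N" using real_arch_simple by blast
            have "\<forall>\<^sub>F m in sequentially. indicator {0..real m} s * G s = G0 s"
            proof (rule eventually_sequentiallyI[of N])
              fix m assume "N \<le> m"
              then have "s \<le> real m" using N by (meson of_nat_le_iff order_trans)
              then show "indicator {0..real m} s * G s = G0 s" by (simp add: G0_def indicator_def)
            qed
            then show "(\<lambda>m. indicator {0..real m} s * G s) \<longlonglongrightarrow> G0 s" by (rule tendsto_eventually)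
          next
            fix m :: nat
            show "(\<lambda>s. indicator {0..real m} s * G s) \<in> borel_measurable lebesgue"
              using has_integral_implies_lebesgue_measurable[OF integrable_integral[OF Gint[of "real m"]]] by simp
          qed
          note G0m[measurable]
          have idm: "(\<lambda>x::real. x) \<in> borel_measurable lebesgue"
            by (intro measurable_completion) simp
          have G0eq: "G0 s = G s" if "s \<ge> 0" for s using that by (simp add: G0_def)
          have BfG: "exp (lam0 * s) * G0 s = Bf s" if "s \<ge> 0" for s
            using that by (simp add: G0eq G_def exp_minus field_simps)
          define u where "u s = (if 0 \<le> s then (if 0 < exp (lam0 * s) * G0 s
              then ennreal (exp (- \<rho> * s) * (exp (lam0 * s) * G0 s) powr (1 - \<gamma>)) else \<infinity>) else 0)" for s
          have um[measurable]: "u \<in> borel_measurable lebesgue"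
          proof -
            note idm[measurable]
            show ?thesis unfolding u_def by measurable
          qed
          define k0 where "k0 = (2/\<gamma>) * (2*(1-1/\<gamma>)) powr (\<gamma>-1)"
          have "2*(1-1/\<gamma>) > 0" using g1 by (simp add: field_simps)
          then have "(2*(1-1/\<gamma>)) powr (\<gamma>-1) > 0" by (intro powr_gt_zero[THEN iffD2]) linarith
          then have k0: "k0 > 0" using g1 unfolding k0_def by (intro mult_pos_pos) auto
          define \<kappa> where "\<kappa> = K powr \<gamma> / (k0 * (\<gamma> - 1))"
          have \<kappa>: "\<kappa> > 0" using Kp k0 g1 by (simp add: \<kappa>_def)
          define Jint where "Jint s = (\<integral>\<^sup>+\<theta>. ennreal (exp (- \<rho> * s) * f \<theta> / \<bar>1 - \<gamma>\<bar>) * upow \<gamma> (rep (c s) \<theta>) \<partial>M)" for s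
          have Jeq: "Jfun M rep f \<rho> \<gamma> c = - enn2ereal (\<integral>\<^sup>+s. Jint s * indicator {0..} s \<partial>lborel)"
            using g1 by (simp add: Jfun_def Jint_def)
          have Jfin: "(\<integral>\<^sup>+s. Jint s * indicator {0..} s \<partial>lborel) < \<infinity>"
          proof (rule ccontr)
            assume "\<not> ?thesis"
            then have "(\<integral>\<^sup>+s. Jint s * indicator {0..} s \<partial>lborel) = \<infinity>" by (simp add: less_top[symmetric])
            then have "Jfun M rep f \<rho> \<gamma> c = - \<infinity>" using Jeq by simp
            then show False using J by simp
          qed
          have uJ: "ennreal \<kappa> * u s \<le> Jint s * indicator {0..} s" for s
          proof (cases "s \<ge> 0")
            case False then show ?thesis by (simp add: u_def)
          next
            case True
            define w where "w \<theta> = eta \<theta> * beta \<theta>" for \<theta>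
            have wm: "w \<in> borel_measurable M" unfolding w_def using eta(1) dens(1) by measurable
            have wpos: "\<And>\<theta>. \<theta> \<in> space M \<Longrightarrow> w \<theta> > 0" unfolding w_def using eta(2) dens(2) by simp
            have a0: "AE \<theta> in M. 0 \<le> rep (c s) \<theta>"
              using cpos[OF True] by (intro qe_AE) (simp add: Xplus_def)
            have d3: "integrable M (\<lambda>\<theta>. rep (Nop (c s)) \<theta> * beta \<theta>)" "Bf s = (\<integral>\<theta>. rep (Nop (c s)) \<theta> * beta \<theta> \<partial>M)"
              using dens(3) by (auto simp: Bf_def)
            have ae: "AE \<theta> in M. rep (Nop (c s)) \<theta> * beta \<theta> = w \<theta> * rep (c s) \<theta>"
              using qe_AE[OF N[rule_format, of "c s"]] by (rule AE_mp) (auto simp: w_def intro!: AE_I2)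
            have m1: "(\<lambda>\<theta>. rep (Nop (c s)) \<theta> * beta \<theta>) \<in> borel_measurable M"
              using rep_meas[OF X] dens(1) by measurable
            have m2: "(\<lambda>\<theta>. w \<theta> * rep (c s) \<theta>) \<in> borel_measurable M"
              using rep_meas[OF X] wm by measurable
            have intB: "integrable M (\<lambda>\<theta>. w \<theta> * rep (c s) \<theta>)"
              using d3(1) integrable_cong_AE[OF m1 m2 ae] by simp
            have Bfi: "Bf s = (\<integral>\<theta>. w \<theta> * rep (c s) \<theta> \<partial>M)"
              using d3(2) integral_cong_AE[OF m1 m2 ae] by simp
            have SLi: "(if Bf s > 0 then ennreal (K powr \<gamma> * Bf s powr (1-\<gamma>) / k0) else \<infinity>)
                \<le> (\<integral>\<^sup>+\<theta>. ennreal (f \<theta>) * upow \<gamma> (rep (c s) \<theta>) \<partial>M)"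
              unfolding k0_def
              by (rule SL[OF g1 rep_meas[OF X] f(1) wm _ _ a0 _ _ Kp intB Bfi])
                 (use f(2) wpos intK in \<open>auto simp: w_def K_def\<close>)
            have Js: "Jint s = ennreal (exp (- \<rho> * s) / (\<gamma> - 1)) * (\<integral>\<^sup>+\<theta>. ennreal (f \<theta>) * upow \<gamma> (rep (c s) \<theta>) \<partial>M)"
            proof -
              have "Jint s = (\<integral>\<^sup>+\<theta>. ennreal (exp (- \<rho> * s) / (\<gamma> - 1)) * (ennreal (f \<theta>) * upow \<gamma> (rep (c s) \<theta>)) \<partial>M)"
                unfolding Jint_def
              proof (rule nn_integral_cong)
                fix \<theta> assume "\<theta> \<in> space M"
                then have "f \<theta> > 0" using f(2) by simp
                then show "ennreal (exp (- \<rho> * s) * f \<theta> / \<bar>1 - \<gamma>\<bar>) * upow \<gamma> (rep (c s) \<theta>)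
                    = ennreal (exp (- \<rho> * s) / (\<gamma> - 1)) * (ennreal (f \<theta>) * upow \<gamma> (rep (c s) \<theta>))"
                  using g1 by (simp add: ennreal_mult'[symmetric] mult.assoc[symmetric] field_simps)
              qed
              also have "\<dots> = ennreal (exp (- \<rho> * s) / (\<gamma> - 1)) * (\<integral>\<^sup>+\<theta>. ennreal (f \<theta>) * upow \<gamma> (rep (c s) \<theta>) \<partial>M)"
                using rep_meas[OF X] f(1) upow_meas[OF rep_meas[OF X]] by (intro nn_integral_cmult) measurable
              finally show ?thesis .
            qed
            show ?thesis
            proof (cases "Bf s > 0")
              case Bp: True
              have us: "u s = ennreal (exp (- \<rho> * s) * Bf s powr (1 - \<gamma>))"
                using True Bp BfG[OF True] by (simp add: u_def)
              have "ennreal \<kappa> * u s = ennreal (exp (- \<rho> * s) / (\<gamma> - 1)) * ennreal (K powr \<gamma> * Bf s powr (1-\<gamma>) / k0)"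
                unfolding us using \<kappa> g1 k0
                by (simp add: ennreal_mult'[symmetric] \<kappa>_def field_simps)
              also have "\<dots> \<le> Jint s" unfolding Js using SLi Bp by (intro mult_left_mono) auto
              finally show ?thesis using True by simp
            next
              case Bz: False
              then have "(\<integral>\<^sup>+\<theta>. ennreal (f \<theta>) * upow \<gamma> (rep (c s) \<theta>) \<partial>M) = \<infinity>" using SLi by (simp add: top_unique)
              then have "Jint s = \<infinity>" unfolding Js using g1 by (simp add: ennreal_mult_top)
              then show ?thesis using True by simp
            qed
          qed
          have ufin: "(\<integral>\<^sup>+s. u s \<partial>lebesgue) < \<infinity>"
          proof -
            have "ennreal \<kappa> * (\<integral>\<^sup>+s. u s \<partial>lebesgue) = (\<integral>\<^sup>+s. ennreal \<kappa> * u s \<partial>lebesgue)"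
              by (rule nn_integral_cmult[symmetric]) simp
            also have "\<dots> = (\<integral>\<^sup>+s. ennreal \<kappa> * u s \<partial>lborel)" by (rule nn_integral_completion)
            also have "\<dots> \<le> (\<integral>\<^sup>+s. Jint s * indicator {0..} s \<partial>lborel)" by (rule nn_integral_mono) (rule uJ)
            also have "\<dots> < \<infinity>" by (rule Jfin)
            finally have "ennreal \<kappa> * (\<integral>\<^sup>+s. u s \<partial>lebesgue) < \<infinity>" .
            then show ?thesis
            proof (rule contrapos_pp)
              assume "\<not> (\<integral>\<^sup>+s. u s \<partial>lebesgue) < \<infinity>"
              then have "(\<integral>\<^sup>+s. u s \<partial>lebesgue) = \<infinity>" by (simp add: less_top[symmetric])
              then show "\<not> ennreal \<kappa> * (\<integral>\<^sup>+s. u s \<partial>lebesgue) < \<infinity>" using \<kappa> by (simp add: ennreal_mult_top)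
            qed
          qed
          define V where "V n = (\<integral>\<^sup>+s. indicator {real n..} s * u s \<partial>lebesgue)" for n :: nat
          have Vle: "V n \<le> (\<integral>\<^sup>+s. u s \<partial>lebesgue)" for n
            unfolding V_def by (rule nn_integral_mono) (simp split: split_indicator)
          have Vfin: "V n < \<infinity>" for n using Vle[of n] ufin by (rule le_less_trans)
          have Vlim: "V \<longlonglongrightarrow> 0"
          proof -
            have mV: "(\<lambda>s. indicator {real n..} s * u s) \<in> borel_measurable lebesgue" for n
              using idm by measurable
            have dec: "decseq (\<lambda>n s. indicator {real n..} s * u s)"
              by (rule decseq_SucI) (simp add: le_fun_def split: split_indicator)
            have "(\<integral>\<^sup>+s. (INF n. indicator {real n..} s * u s) \<partial>lebesgue) = (INF n. V n)"
              unfolding V_def by (rule nn_integral_monotone_convergence_INF_decseq[OF dec]) (use Vfin V_def mV in auto)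
            moreover have "(INF n. indicator {real n..} s * u s) = 0" for s
            proof -
              obtain n :: nat where "s < real n" using reals_Archimedean2 by blast
              then have "indicator {real n..} s * u s = 0" by simp
              then show ?thesis by (metis (no_types, lifting) INF_lower2 UNIV_I le_zero_eq)
            qed
            ultimately have "(INF n. V n) = 0" by simp
            moreover have "decseq V" unfolding V_def
              by (rule decseq_SucI, rule nn_integral_mono) (simp split: split_indicator)
            ultimately show ?thesis using LIMSEQ_INF by metis
          qed
          have Vr: "(\<lambda>n. enn2real (V n)) \<longlonglongrightarrow> 0"
          proof -
            have "V \<longlonglongrightarrow> ennreal 0" using Vlim by simp
            from tendsto_enn2real[OF this] show ?thesis by simp
          qed
          have key: "exp (- \<delta> * real n) * Xn (real n) powr (1 - \<gamma>) \<le> exp \<delta> * k0 * enn2real (V n)" for n :: nat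
          proof -
            define t where "t = real n"
            have t0: "t \<ge> 0" by (simp add: t_def)
            define X where "X = Xn t"
            have Xp: "X > 0" using Xpos t0 by (simp add: X_def)
            have X1: "Xn (t + 1) > 0" using Xpos t0 by simp
            define R where "R = integral {t..t+1} G"
            have Gi1: "G integrable_on {t..t+1}"
              by (rule integrable_subinterval_real[OF Gint[of "t+1"]]) (use t0 in auto)
            have R0: "R \<ge> 0" unfolding R_def using Gi1 Gnn t0 by (intro integral_nonneg) auto
            have Rcomb: "integral {0..t} G + R = integral {0..t+1} G"
              unfolding R_def by (rule Henstock_Kurzweil_Integration.integral_combine) (use t0 Gint[of "t+1"] in auto)
            have RX: "R \<le> X" using X1 Rcomb by (simp add: Xn_def X_def)
            define cc where "cc = exp (- \<delta> * (t + 1) / \<gamma>)"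
            have cc: "cc > 0" by (simp add: cc_def)
            define b where "b = 1 - 1/\<gamma>"
            have b: "b > 0" using g1 by (simp add: b_def)
            define l where "l = cc / (2*b*X)"
            have l: "l > 0" using cc b Xp by (simp add: l_def)
            define A1 where "A1 = (1/\<gamma>) * l powr (1-\<gamma>)"
            have A1: "A1 > 0" using g1 l by (simp add: A1_def)
            define A2 where "A2 = b * l"
            have A2: "A2 > 0" using b l by (simp add: A2_def)
            define Uu where "Uu = (\<integral>\<^sup>+s. indicator {t..t+1} s * u s \<partial>lebesgue)"
            have UuV: "Uu \<le> V n" unfolding Uu_def V_def t_def
              by (rule nn_integral_mono) (simp split: split_indicator)
            have Uufin: "Uu < \<infinity>" using UuV Vfin[of n] by (rule le_less_trans)
            have pw: "indicator {t..t+1} s * ennreal cc \<le> indicator {t..t+1} s * (ennreal A1 * u s + ennreal A2 * ennreal (G0 s))" for s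
            proof (cases "s \<in> {t..t+1}")
              case False then show ?thesis by simp
            next
              case True
              then have s0: "s \<ge> 0" "s \<le> t + 1" using t0 by auto
              show ?thesis
              proof (cases "Bf s > 0")
                case Bp: True
                have us: "u s = ennreal (exp (- \<rho> * s) * Bf s powr (1 - \<gamma>))" using s0 Bp BfG[of s] by (simp add: u_def)
                have Gs: "G0 s = exp (- lam0 * s) * Bf s" using s0 by (simp add: G0eq G_def)
                have "\<delta> * s / \<gamma> \<le> \<delta> * (t + 1) / \<gamma>" using s0 \<delta> g1 by (intro divide_right_mono mult_left_mono) auto
                then have "cc \<le> exp (- \<delta> * s / \<gamma>)" unfolding cc_def by simp
                also have "exp (- \<delta> * s / \<gamma>) = exp (- \<rho> * s) powr (1/\<gamma>) * exp (- lam0 * s) powr (1 - 1/\<gamma>)"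
                  using g1 by (simp add: powr_def exp_add[symmetric] \<delta>_def field_simps)
                also have "\<dots> = (exp (- \<rho> * s) * Bf s powr (1-\<gamma>)) powr (1/\<gamma>) * (exp (- lam0 * s) * Bf s) powr (1 - 1/\<gamma>)"
                  by (rule powr_ident[symmetric, OF g1 Bp]) auto
                also have "\<dots> \<le> (1/\<gamma>) * (l powr (1-\<gamma>) * (exp (- \<rho> * s) * Bf s powr (1-\<gamma>))) + (1 - 1/\<gamma>) * (l * (exp (- lam0 * s) * Bf s))"
                  by (rule young_lam) (use g1 l Bp in auto)
                also have "\<dots> = A1 * (exp (- \<rho> * s) * Bf s powr (1-\<gamma>)) + A2 * G0 s"
                  by (simp add: A1_def A2_def b_def Gs)
                finally have "ennreal cc \<le> ennreal (A1 * (exp (- \<rho> * s) * Bf s powr (1-\<gamma>)) + A2 * G0 s)"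
                  by (rule ennreal_leI)
                also have "\<dots> = ennreal A1 * u s + ennreal A2 * ennreal (G0 s)"
                  using A1 A2 Gnn[OF s0(1)] G0eq[OF s0(1)] unfolding us
                  by (simp add: ennreal_plus ennreal_mult')
                finally show ?thesis using True by simp
              next
                case Bz: False
                then have "u s = \<infinity>" using s0 BfG[of s] by (simp add: u_def)
                then have "ennreal A1 * u s = \<infinity>" using A1 by (simp add: ennreal_mult_top)
                then show ?thesis using True by simp
              qed
            qed
            have lhs: "(\<integral>\<^sup>+s. indicator {t..t+1} s * ennreal cc \<partial>lebesgue) = ennreal cc"
            proof -
              have "(\<integral>\<^sup>+s. indicator {t..t+1} s * ennreal cc \<partial>lebesgue) = (\<integral>\<^sup>+s. ennreal cc * indicator {t..t+1} s \<partial>lborel)"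
                by (subst nn_integral_completion) (simp add: mult.commute)
              also have "\<dots> = ennreal cc * emeasure lborel {t..t+1}" by (rule nn_integral_cmult_indicator) simp
              also have "\<dots> = ennreal cc" by simp
              finally show ?thesis .
            qed
            have GR: "(\<integral>\<^sup>+s. indicator {t..t+1} s * ennreal (G0 s) \<partial>lebesgue) = ennreal R"
            proof -
              have "(\<integral>\<^sup>+s. indicator {t..t+1} s * ennreal (G0 s) \<partial>lebesgue) = (\<integral>\<^sup>+s. ennreal (G s) * indicator {t..t+1} s \<partial>lborel)"
                by (subst nn_integral_completion, rule nn_integral_cong) (use t0 in \<open>auto simp: G0eq split: split_indicator\<close>)
              also have "\<dots> = ennreal R" unfolding R_def
                by (rule nn_integral_has_integral_lebesgue') (use Gnn t0 integrable_integral[OF Gi1] in auto)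
              finally show ?thesis .
            qed
            have m1: "(\<lambda>s. indicator {t..t+1} s * u s) \<in> borel_measurable lebesgue"
              using idm by measurable
            have m2: "(\<lambda>s. indicator {t..t+1} s * ennreal (G0 s)) \<in> borel_measurable lebesgue"
              using idm by measurable
            have "ennreal cc = (\<integral>\<^sup>+s. indicator {t..t+1} s * ennreal cc \<partial>lebesgue)" by (rule lhs[symmetric])
            also have "\<dots> \<le> (\<integral>\<^sup>+s. indicator {t..t+1} s * (ennreal A1 * u s + ennreal A2 * ennreal (G0 s)) \<partial>lebesgue)"
              by (rule nn_integral_mono) (rule pw)
            also have "\<dots> = (\<integral>\<^sup>+s. ennreal A1 * (indicator {t..t+1} s * u s) + ennreal A2 * (indicator {t..t+1} s * ennreal (G0 s)) \<partial>lebesgue)"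
              by (rule nn_integral_cong) (simp add: distrib_left mult_ac)
            also have "\<dots> = ennreal A1 * Uu + ennreal A2 * ennreal R"
              unfolding Uu_def GR[symmetric]
              using m1 m2 by (simp add: nn_integral_add nn_integral_cmult)
            finally have ineq1: "ennreal cc \<le> ennreal A1 * Uu + ennreal A2 * ennreal R" .
            have "ennreal A1 * Uu + ennreal A2 * ennreal R = ennreal (A1 * enn2real Uu + A2 * R)"
              using Uufin A1 A2 R0 by (simp add: ennreal_plus ennreal_mult')
            then have e: "ennreal cc \<le> ennreal (A1 * enn2real Uu + A2 * R)" using ineq1 by simp
            have nn: "0 \<le> A1 * enn2real Uu + A2 * R" using A1 A2 R0 by simp
            have "cc \<le> A1 * enn2real Uu + A2 * R" using ennreal_le_iff[OF nn] e by simp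
            also have "A1 * enn2real Uu + A2 * R = (1/\<gamma>) * ((cc / (2*(1-1/\<gamma>)*X)) powr (1-\<gamma>) * enn2real Uu) + (1-1/\<gamma>) * ((cc/(2*(1-1/\<gamma>)*X)) * R)"
              by (simp add: A1_def A2_def l_def b_def mult.assoc)
            finally have cle: "cc \<le> (1/\<gamma>) * ((cc / (2*(1-1/\<gamma>)*X)) powr (1-\<gamma>) * enn2real Uu) + (1-1/\<gamma>) * ((cc/(2*(1-1/\<gamma>)*X)) * R)" .
            have GLi: "cc powr \<gamma> * X powr (1-\<gamma>) \<le> k0 * enn2real Uu"
              unfolding k0_def by (rule GL[OF g1 cc Xp _ R0 RX cle]) simp
            have ccg: "cc powr \<gamma> = exp (- \<delta> * t) * exp (- \<delta>)"
              unfolding cc_def using g1 by (simp add: powr_def exp_add[symmetric] field_simps)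
            have "exp (- \<delta> * t) * X powr (1-\<gamma>) = exp \<delta> * (cc powr \<gamma> * X powr (1-\<gamma>))"
              by (simp add: ccg exp_minus field_simps)
            also have "\<dots> \<le> exp \<delta> * (k0 * enn2real Uu)" using GLi by (rule mult_left_mono) simp
            also have "\<dots> \<le> exp \<delta> * (k0 * enn2real (V n))"
            proof -
              have "enn2real Uu \<le> enn2real (V n)" by (rule enn2real_mono[OF UuV]) (use Vfin[of n] in simp)
              then show ?thesis using k0 by (intro mult_left_mono) auto
            qed
            finally show ?thesis by (simp add: X_def t_def mult.assoc)
          qed

          show ?thesis
          proof (rule tendsto_sandwich[OF _ _ tendsto_const tendsto_mult_right_zero[OF Vr]])
            show "\<forall>\<^sub>F n in sequentially. 0 \<le> exp (- \<delta> * real n) * Xn (real n) powr (1 - \<gamma>)" by simp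
            show "\<forall>\<^sub>F n in sequentially. exp (- \<delta> * real n) * Xn (real n) powr (1 - \<gamma>) \<le> exp \<delta> * k0 * enn2real (V n)"
              using key by simp
          qed
        qed

        show ?thesis
          by (rule Lim_null_comparison[OF always_eventually[OF allI[OF bnd]]])
             (rule tendsto_mult_right_zero[OF main])
      qed
    qed

  qed
qed

end
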